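(* Let $n,m$ be positive integers, $A_1,\dots,A_m\in\mathbb{S}_n$, $\mathcal{A}(X)=(\langle A_i,X\rangle)_{i=1}^m$, $\mathcal{A}^*(y)=\sum_i y_iA_i$, with $\mathcal{A}\mathcal{A}^*$ invertible; let $b\in\mathbb{R}^m$, $C\in\mathbb{S}_n$, $D:=\mathcal{A}^*((\mathcal{A}\mathcal{A}^* )^{-1}b)$. Assume the problem $\inf\{\langle D,S+C\rangle: y\in\mathbb{R}^m,\ S\succeq0,\ \operatorname{diag}(S)=\mathbf{1},\ S=\mathcal{A}^*(y)-C\}$ admits a KKT point. Let $0<\sigma_{\min}<\sigma_{\max}$ and let $\{\varepsilon_k\},\{\tau_k\}\subseteq(0,\infty)$ with $\sum_k\varepsilon_k<\infty$, $\sum_k\tau_k<\infty$. Consider sequences generated as follows: $y^0=0$, $\widetilde{X}^0=0$, and for $k=0,1,2,\dots$: choose $\sigma_k\in[\sigma_{\min},\sigma_{\max}]$, a positive integer $p_{k+1}$ and $Y^{k+1}\in\mathbb{R}^{n\times p_{k+1}}$ all of whose rows have Euclidean norm $1$; set $S^{k+1}=Y^{k+1}(Y^{k+1})^{\intercal}$, $y^{k+1}=(\mathcal{A}\mathcal{A}^* )^{-1}\mathcal{A}(S^{k+1}+C)$, $\widetilde{X}^{k+1}=\widetilde{X}^k-\sigma_k(\mathcal{A}^*(y^{k+1})-S^{k+1}-C)$, $z^{k+1}=\operatorname{diag}((\widetilde{X}^{k+1}+D)S^{k+1})$, $X^{k+1}=\widetilde{X}^{k+1}+D-\operatorname{Diag}(z^{k+1})$;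 and suppose that for every $k$, $\|X^{k+1}Y^{k+1}\|\le\varepsilon_k$ and $\lambda_{\min}(X^{k+1})\ge-\tau_k$. Let $R^k=\mathcal{A}^*(y^k)-S^k-C$. Then $\lim_{k\to\infty}\|R^k\|=0$.
   Context: $\mathbb{S}_n$ denotes real symmetric $n\times n$ matrices, $\langle A,B\rangle=\mathrm{Tr}(A^{\intercal}B)$, $\|\cdot\|$ the Frobenius norm, $\lambda_{\min}$ the smallest eigenvalue. For a square matrix $M$, $\operatorname{diag}(M)$ is its diagonal vector; for a vector $z$, $\operatorname{Diag}(z)$ is the diagonal matrix with diagonal $z$; $\mathbf{1}$ is the all-ones vector. A KKT point of the stated problem is a tuple $(S,y,X,z)\in\mathbb{S}_n\times\mathbb{R}^m\times\mathbb{S}_n\times\mathbb{R}^n$ with $S=\mathcal{A}^*(y)-C$, $S\succeq0$, $\operatorname{diag}(S)=\mathbf{1}$, $X\succeq0$, $\langle X,S\rangle=0$ and $\mathcal{A}(X+\operatorname{Diag}(z))=b$. *)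

theory Defs
  imports "Jordan_Normal_Form.Matrix" "Jordan_Normal_Form.Char_Poly"
    "Jordan_Normal_Form.Gauss_Jordan_Elimination" Complex_Main
begin

definition sym_mats :: "nat \<Rightarrow> real mat set" where
  "sym_mats n = {A. A \<in> carrier_mat n n \<and> transpose_mat A = A}"

definition mtrace :: "real mat \<Rightarrow> real" where
  "mtrace M = (\<Sum>i<dim_row M. M $$ (i, i))"

definition minner :: "real mat \<Rightarrow> real mat \<Rightarrow> real" where
  "minner A B = mtrace (transpose_mat A * B)"

definition fnorm :: "real mat \<Rightarrow> real" where
  "fnorm A = sqrt (minner A A)"

definition psd :: "nat \<Rightarrow> real mat \<Rightarrow> bool" where
  "psd n S \<longleftrightarrow> S \<in> sym_mats n \<and> (\<forall>x \<in> carrier_vec n. 0 \<le> x \<bullet> (S *\<^sub>v x))"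

definition lambda_min :: "real mat \<Rightarrow> real" where
  "lambda_min X = Min {l. eigenvalue X l}"

definition mdiag :: "real mat \<Rightarrow> real vec" where
  "mdiag M = vec (dim_row M) (\<lambda>i. M $$ (i, i))"

definition Diagm :: "real vec \<Rightarrow> real mat" where
  "Diagm z = mat (dim_vec z) (dim_vec z) (\<lambda>(i, j). if i = j then z $ i else 0)"

definition Aop :: "nat \<Rightarrow> (nat \<Rightarrow> real mat) \<Rightarrow> real mat \<Rightarrow> real vec" where
  "Aop m As X = vec m (\<lambda>i. minner (As i) X)"

definition Aadj :: "nat \<Rightarrow> nat \<Rightarrow> (nat \<Rightarrow> real mat) \<Rightarrow> real vec \<Rightarrow> real mat" where
  "Aadj n m As y = mat n n (\<lambda>(r, c). \<Sum>i<m. y $ i * As i $$ (r, c))"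

definition AAstar :: "nat \<Rightarrow> (nat \<Rightarrow> real mat) \<Rightarrow> real mat" where
  "AAstar m As = mat m m (\<lambda>(i, j). minner (As i) (As j))"

definition minv :: "real mat \<Rightarrow> real mat" where
  "minv M = the (mat_inverse M)"

definition ones :: "nat \<Rightarrow> real vec" where
  "ones n = vec n (\<lambda>_. 1)"

definition is_KKT :: "nat \<Rightarrow> nat \<Rightarrow> (nat \<Rightarrow> real mat) \<Rightarrow> real vec \<Rightarrow> real mat
    \<Rightarrow> real mat \<Rightarrow> real vec \<Rightarrow> real mat \<Rightarrow> real vec \<Rightarrow> bool" where
  "is_KKT n m As b C S y X z \<longleftrightarrow>
     S \<in> sym_mats n \<and> y \<in> carrier_vec m \<and> X \<in> sym_mats n \<and> z \<in> carrier_vec n \<and>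
     S = Aadj n m As y - C \<and> psd n S \<and> mdiag S = ones n \<and>
     psd n X \<and> minner X S = 0 \<and> Aop m As (X + Diagm z) = b"

end

theory Submission
  imports Defs "HOL-Analysis.Function_Topology"
begin


definition qf :: "nat \<Rightarrow> (nat \<Rightarrow> nat \<Rightarrow> real) \<Rightarrow> (nat \<Rightarrow> real) \<Rightarrow> real" where
  "qf n a f = (\<Sum>i<n. f i * (\<Sum>j<n. a i j * f j))"

lemma qf_restrict: "qf n a (restrict f {..<n}) = qf n a f"
  unfolding qf_def by (intro sum.cong refl) (auto intro!: sum.cong)

lemma exists_min_sphere:
  assumes n: "0 < n"
  shows "\<exists>f0. (\<Sum>i<n. (f0 i)\<^sup>2) = 1 \<and> (\<forall>f. (\<Sum>i<n. (f i)\<^sup>2) = 1 \<longrightarrow> qf n a f0 \<le> qf n a f)"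
proof -
  let ?T = "product_topology (\<lambda>_. euclideanreal) {..<n}"
  let ?P = "PiE {..<n} (\<lambda>_. {-1..1::real})"
  let ?g = "\<lambda>f::nat\<Rightarrow>real. (\<Sum>i<n. (f i)\<^sup>2)"
  let ?K = "{f \<in> topspace ?T. ?g f \<in> {1}} \<inter> ?P"
  have cP: "compactin ?T ?P"
    by (subst compactin_PiE) auto
  have proj: "continuous_map ?T euclideanreal (\<lambda>f. f i)" if "i < n" for i
    using continuous_map_product_projection[of i "{..<n}" "\<lambda>_. euclideanreal"] that by simp
  have cg: "continuous_map ?T euclideanreal ?g"
    unfolding power2_eq_square
    by (intro continuous_map_sum continuous_map_real_mult proj) auto
  have cq: "continuous_map ?T euclideanreal (qf n a)"
    unfolding qf_def
    by (intro continuous_map_sum continuous_map_real_mult proj continuous_map_const[THEN iffD2]) auto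
  have "closedin ?T {f \<in> topspace ?T. ?g f \<in> {1}}"
    by (rule closedin_continuous_map_preimage[OF cg]) auto
  hence cK: "compactin ?T ?K" using cP closed_Int_compactin by blast
  have "compactin euclideanreal (qf n a ` ?K)" by (rule image_compactin[OF cK cq])
  hence cI: "compact (qf n a ` ?K)" by simp
  define e where "e = restrict (\<lambda>i. if i = 0 then 1 else 0::real) {..<n}"
  have "(\<Sum>i<n. (e i)\<^sup>2) = (\<Sum>i<n. if i = 0 then 1 else 0)"
    by (intro sum.cong) (auto simp: e_def)
  also have "\<dots> = 1" using n by simp
  finally have "e \<in> ?K" unfolding e_def by (auto simp: PiE_iff)
  hence ne: "qf n a ` ?K \<noteq> {}" by blast
  obtain s where s: "s \<in> qf n a ` ?K" and smin: "\<And>t. t \<in> qf n a ` ?K \<Longrightarrow> s \<le> t"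
    using compact_attains_inf[OF cI ne] by blast
  obtain f0 where f0: "f0 \<in> ?K" "s = qf n a f0" using s by blast
  show ?thesis
  proof (intro exI[of _ f0] conjI allI impI)
    show "?g f0 = 1" using f0 by auto
    fix f assume f: "?g f = 1"
    have bnd: "\<bar>f i\<bar> \<le> 1" if "i < n" for i
    proof -
      have "(f i)\<^sup>2 \<le> ?g f" using that by (intro member_le_sum) auto
      hence "(f i)\<^sup>2 \<le> 1\<^sup>2" using f by simp
      thus ?thesis using abs_le_square_iff[of "f i" 1] by simp
    qed
    have "restrict f {..<n} \<in> ?K" using f bnd by (auto simp: PiE_iff abs_le_iff)
    hence "s \<le> qf n a (restrict f {..<n})" by (intro smin) blast
    thus "qf n a f0 \<le> qf n a f" using f0 qf_restrict by simp
  qed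
qed

lemma cross_sym:
  fixes a :: "nat \<Rightarrow> nat \<Rightarrow> real" and f g :: "nat \<Rightarrow> real"
  assumes sym: "\<forall>i<n. \<forall>j<n. a i j = a j i"
  shows "(\<Sum>i<n. g i * (\<Sum>j<n. a i j * f j)) = (\<Sum>i<n. f i * (\<Sum>j<n. a i j * g j))"
proof -
  have "(\<Sum>i<n. g i * (\<Sum>j<n. a i j * f j)) = (\<Sum>i<n. \<Sum>j<n. g i * a i j * f j)"
    by (simp add: sum_distrib_left mult.assoc)
  also have "\<dots> = (\<Sum>j<n. \<Sum>i<n. g i * a i j * f j)" by (rule sum.swap)
  also have "\<dots> = (\<Sum>j<n. f j * (\<Sum>i<n. a j i * g i))"
    using sym by (auto simp: sum_distrib_left mult_ac intro!: sum.cong)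
  finally show ?thesis .
qed

lemma qf_expand:
  assumes sym: "\<forall>i<n. \<forall>j<n. a i j = a j i"
  shows "qf n a (\<lambda>i. f i + t * g i) = qf n a f + 2 * t * (\<Sum>i<n. f i * (\<Sum>j<n. a i j * g j)) + t\<^sup>2 * qf n a g"
proof -
  have "qf n a (\<lambda>i. f i + t * g i) = qf n a f + t * (\<Sum>i<n. f i * (\<Sum>j<n. a i j * g j))
     + t * (\<Sum>i<n. g i * (\<Sum>j<n. a i j * f j)) + t\<^sup>2 * qf n a g"
    unfolding qf_def
    by (simp add: algebra_simps sum.distrib sum_distrib_left power2_eq_square)
  thus ?thesis using cross_sym[OF sym, of g f] by simp
qed

lemma qf_scale: "qf n a (\<lambda>i. c * f i) = c\<^sup>2 * qf n a f"
  unfolding qf_def by (simp add: sum_distrib_left power2_eq_square mult_ac)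

lemma psd_cs:
  assumes sym: "\<forall>i<n. \<forall>j<n. a i j = a j i" and psd: "\<forall>f. 0 \<le> qf n a f"
  shows "(\<Sum>i<n. f i * (\<Sum>j<n. a i j * g j))\<^sup>2 \<le> qf n a g * qf n a f"
proof -
  define B where "B = (\<Sum>i<n. f i * (\<Sum>j<n. a i j * g j))"
  define c where "c = qf n a g"
  define Q where "Q = qf n a f"
  have key: "0 \<le> Q + 2 * t * B + t\<^sup>2 * c" for t
    using psd[rule_format, of "\<lambda>i. f i + t * g i"] qf_expand[OF sym, of f t g]
    unfolding B_def c_def Q_def by simp
  have c0: "0 \<le> c" "0 \<le> Q" using psd unfolding c_def Q_def by auto
  show ?thesis
  proof (cases "c = 0")
    case True
    have "B = 0"
    proof (rule ccontr)
      assume "B \<noteq> 0"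
      have "0 \<le> Q + 2 * (- (Q + 1) / (2 * B)) * B" using key[of "- (Q + 1) / (2 * B)"] True by simp
      also have "\<dots> = -1" using \<open>B \<noteq> 0\<close> by (simp add: field_simps)
      finally show False by simp
    qed
    thus ?thesis using True c0 unfolding B_def c_def Q_def by simp
  next
    case False
    hence cp: "0 < c" using c0 by simp
    have "0 \<le> Q + 2 * (- B / c) * B + (- B / c)\<^sup>2 * c" by (rule key)
    also have "\<dots> = Q - B\<^sup>2 / c" using cp by (simp add: field_simps power2_eq_square)
    finally have "B\<^sup>2 / c \<le> Q" by simp
    hence "B\<^sup>2 \<le> c * Q" using cp by (simp add: pos_divide_le_eq mult.commute)
    thus ?thesis unfolding B_def c_def Q_def .
  qed
qed

lemma sum_delta_r: fixes n p :: nat assumes "p < n" shows "(\<Sum>j<n. (x j::real) * (if j = p then 1 else 0)) = x p"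
proof -
  have "(\<Sum>j<n. (x j::real) * (if j = p then 1 else 0)) = (\<Sum>j<n. if j = p then x j else 0)"
    by (intro sum.cong) auto
  also have "\<dots> = x p" using assms by (subst sum.delta) auto
  finally show ?thesis .
qed

lemma sum_delta_l: fixes n p :: nat assumes "p < n" shows "(\<Sum>j<n. (if j = p then 1 else 0) * (x j::real)) = x p"
proof -
  have "(\<Sum>j<n. (if j = p then 1 else 0) * (x j::real)) = (\<Sum>j<n. if j = p then x j else 0)"
    by (intro sum.cong) auto
  also have "\<dots> = x p" using assms by (subst sum.delta) auto
  finally show ?thesis .
qed

lemma qf_delta: "p < n \<Longrightarrow> qf n a (\<lambda>i. if i = p then 1 else 0) = a p p"
  unfolding qf_def by (simp add: sum_delta_r sum_delta_l)

lemma cross_delta: fixes a :: "nat \<Rightarrow> nat \<Rightarrow> real" and f :: "nat \<Rightarrow> real" shows "p < n \<Longrightarrow> (\<Sum>i<n. f i * (\<Sum>j<n. a i j * (if j = p then 1 else 0))) = (\<Sum>i<n. f i * a i p)"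
  by (simp add: sum_delta_r)

lemma min_eig:
  fixes a :: "nat \<Rightarrow> nat \<Rightarrow> real"
  assumes n: "0 < n" and sym: "\<forall>i<n. \<forall>j<n. a i j = a j i"
  shows "\<exists>f0 \<mu>. (\<Sum>i<n. (f0 i)\<^sup>2) = 1 \<and> (\<forall>i<n. (\<Sum>j<n. a i j * f0 j) = \<mu> * f0 i)
     \<and> (\<forall>f. \<mu> * (\<Sum>i<n. (f i)\<^sup>2) \<le> qf n a f)"
proof -
  obtain f0 where f0: "(\<Sum>i<n. (f0 i)\<^sup>2) = 1"
    and mn: "\<forall>f. (\<Sum>i<n. (f i)\<^sup>2) = 1 \<longrightarrow> qf n a f0 \<le> qf n a f"
    using exists_min_sphere[OF n] by blast
  define \<mu> where "\<mu> = qf n a f0"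
  have lb: "\<mu> * (\<Sum>i<n. (f i)\<^sup>2) \<le> qf n a f" for f
  proof (cases "(\<Sum>i<n. (f i)\<^sup>2) = 0")
    case True
    hence "\<forall>i<n. f i = 0" using sum_nonneg_eq_0_iff[of "{..<n}" "\<lambda>i. (f i)\<^sup>2"] by simp
    hence "qf n a f = 0" unfolding qf_def by simp
    thus ?thesis using True by simp
  next
    case False
    define s where "s = (\<Sum>i<n. (f i)\<^sup>2)"
    have "0 \<le> s" unfolding s_def by (intro sum_nonneg) auto
    hence sp: "0 < s" using False unfolding s_def by simp
    define g where "g = (\<lambda>i. (1 / sqrt s) * f i)"
    have gi: "(g i)\<^sup>2 = (f i)\<^sup>2 / s" for i
      using sp by (simp add: g_def power_mult_distrib power_divide)
    have "(\<Sum>i<n. (g i)\<^sup>2) = (\<Sum>i<n. (f i)\<^sup>2) / s"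
      unfolding gi by (simp add: sum_divide_distrib)
    also have "\<dots> = 1" using sp unfolding s_def by simp
    finally have "\<mu> \<le> qf n a g" using mn unfolding \<mu>_def by blast
    also have "qf n a g = qf n a f / s"
      unfolding g_def qf_scale using sp by (simp add: power_divide)
    finally show ?thesis using sp unfolding s_def by (simp add: pos_le_divide_eq mult.commute)
  qed
  define b where "b = (\<lambda>i j. a i j - (if i = j then \<mu> else 0))"
  have bsym: "\<forall>i<n. \<forall>j<n. b i j = b j i" using sym unfolding b_def by auto
  have brow: "(\<Sum>j<n. b i j * f j) = (\<Sum>j<n. a i j * f j) - \<mu> * f i" if "i < n" for i f
  proof -
    have "(\<Sum>j<n. b i j * f j) = (\<Sum>j<n. a i j * f j - (if j = i then \<mu> * f i else 0))"
      unfolding b_def by (intro sum.cong) (auto simp: left_diff_distrib)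
    also have "\<dots> = (\<Sum>j<n. a i j * f j) - \<mu> * f i"
      using that by (simp add: sum_subtractf sum.delta')
    finally show ?thesis .
  qed
  have bq: "qf n b f = qf n a f - \<mu> * (\<Sum>i<n. (f i)\<^sup>2)" for f
  proof -
    have "qf n b f = (\<Sum>i<n. f i * (\<Sum>j<n. a i j * f j) - \<mu> * (f i)\<^sup>2)"
      unfolding qf_def by (intro sum.cong) (auto simp: brow right_diff_distrib power2_eq_square)
    thus ?thesis unfolding qf_def by (simp add: sum_subtractf sum_distrib_left)
  qed
  have bpsd: "\<forall>f. 0 \<le> qf n b f" using lb bq by simp
  have b0: "qf n b f0 = 0" using bq f0 unfolding \<mu>_def by simp
  define h where "h = (\<lambda>i. \<Sum>j<n. b i j * f0 j)"
  have "(\<Sum>i<n. h i * (\<Sum>j<n. b i j * f0 j))\<^sup>2 \<le> qf n b f0 * qf n b h"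
    by (rule psd_cs[OF bsym bpsd])
  hence "(\<Sum>i<n. (h i)\<^sup>2)\<^sup>2 \<le> 0" using b0 unfolding h_def by (simp add: power2_eq_square)
  hence "(\<Sum>i<n. (h i)\<^sup>2) = 0" by simp
  hence hz: "\<forall>i<n. h i = 0" using sum_nonneg_eq_0_iff[of "{..<n}" "\<lambda>i. (h i)\<^sup>2"] by simp
  show ?thesis
  proof (intro exI[of _ f0] exI[of _ \<mu>] conjI allI impI)
    show "(\<Sum>i<n. (f0 i)\<^sup>2) = 1" by fact
    fix i assume "i < n"
    thus "(\<Sum>j<n. a i j * f0 j) = \<mu> * f0 i" using hz brow[of i f0] unfolding h_def by simp
  next
    fix f show "\<mu> * (\<Sum>i<n. (f i)\<^sup>2) \<le> qf n a f" by (rule lb)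
  qed
qed

lemma gram_aux:
  fixes n :: nat
  shows "\<forall>a::nat\<Rightarrow>nat\<Rightarrow>real. (\<forall>i<n. \<forall>j<n. a i j = a j i) \<and> (\<forall>f. 0 \<le> qf n a f)
     \<and> (\<forall>i<n. \<forall>j<n. (r \<le> i \<or> r \<le> j) \<longrightarrow> a i j = 0)
     \<longrightarrow> (\<exists>w. \<forall>i<n. \<forall>j<n. a i j = (\<Sum>k<r. w k i * w k j))"
proof (induction r)
  case 0
  show ?case by auto
next
  case (Suc r)
  show ?case
  proof (intro allI impI)
    fix a :: "nat \<Rightarrow> nat \<Rightarrow> real"
    assume H: "(\<forall>i<n. \<forall>j<n. a i j = a j i) \<and> (\<forall>f. 0 \<le> qf n a f)
     \<and> (\<forall>i<n. \<forall>j<n. (Suc r \<le> i \<or> Suc r \<le> j) \<longrightarrow> a i j = 0)"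
    hence sym: "\<forall>i<n. \<forall>j<n. a i j = a j i" and psd: "\<forall>f. 0 \<le> qf n a f"
      and zr: "\<forall>i<n. \<forall>j<n. (Suc r \<le> i \<or> Suc r \<le> j) \<longrightarrow> a i j = 0" by auto
    show "\<exists>w. \<forall>i<n. \<forall>j<n. a i j = (\<Sum>k<Suc r. w k i * w k j)"
    proof (cases "r < n \<and> 0 < a r r")
      case True
      hence rn: "r < n" and cp: "0 < a r r" by auto
      define c where "c = a r r"
      define a' where "a' = (\<lambda>i j. a i j - a i r * a r j / c)"
      have sym': "\<forall>i<n. \<forall>j<n. a' i j = a' j i"
        using sym rn unfolding a'_def by (auto simp: mult.commute)
      have psd': "\<forall>f. 0 \<le> qf n a' f"
      proof
        fix f
        define B where "B = (\<Sum>i<n. f i * a i r)"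
        have rowr: "(\<Sum>j<n. a r j * f j) = B"
          unfolding B_def using sym rn by (auto simp: mult.commute intro!: sum.cong)
        have "qf n a' f = (\<Sum>i<n. f i * (\<Sum>j<n. a i j * f j) - (f i * a i r) * B / c)"
          unfolding qf_def a'_def
          by (intro sum.cong refl) (simp add: left_diff_distrib sum_subtractf right_diff_distrib
              sum_distrib_left[symmetric] sum_divide_distrib[symmetric] rowr[symmetric] mult.assoc)
        also have "\<dots> = qf n a f - B * B / c"
          unfolding qf_def B_def by (simp add: sum_subtractf sum_divide_distrib[symmetric] sum_distrib_right[symmetric])
        finally have eq: "qf n a' f = qf n a f - B * B / c" .
        have "B\<^sup>2 \<le> qf n a (\<lambda>i. if i = r then 1 else 0) * qf n a f"
          using psd_cs[OF sym psd, of f "\<lambda>i. if i = r then 1 else 0"] rn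
          unfolding cross_delta[OF rn] B_def by simp
        hence "B * B \<le> c * qf n a f" using qf_delta[OF rn] unfolding c_def by (simp add: power2_eq_square)
        hence "B * B / c \<le> qf n a f" using cp unfolding c_def by (simp add: pos_divide_le_eq mult.commute)
        thus "0 \<le> qf n a' f" using eq by simp
      qed
      have zr': "\<forall>i<n. \<forall>j<n. (r \<le> i \<or> r \<le> j) \<longrightarrow> a' i j = 0"
      proof (intro allI impI)
        fix i j assume ij: "i < n" "j < n" "r \<le> i \<or> r \<le> j"
        show "a' i j = 0"
        proof (cases "i = r")
          case True thus ?thesis using cp unfolding a'_def c_def by simp
        next
          case ni: False
          show ?thesis
          proof (cases "j = r")
            case True thus ?thesis using cp unfolding a'_def c_def by simp
          next
            case False
            thus ?thesis using ni ij zr rn unfolding a'_def by auto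
          qed
        qed
      qed
      obtain w' where w': "\<forall>i<n. \<forall>j<n. a' i j = (\<Sum>k<r. w' k i * w' k j)"
        using Suc.IH sym' psd' zr' by blast
      define w where "w = w'(r := (\<lambda>i. a i r / sqrt c))"
      show ?thesis
      proof (intro exI[of _ w] allI impI)
        fix i j assume ij: "i < n" "j < n"
        have "(\<Sum>k<Suc r. w k i * w k j) = (\<Sum>k<r. w' k i * w' k j) + a i r / sqrt c * (a j r / sqrt c)"
          unfolding w_def by (simp add: lessThan_Suc)
        also have "\<dots> = a' i j + a i r * a r j / c"
          using w' ij sym rn cp unfolding c_def by (simp add: field_simps)
        also have "\<dots> = a i j" unfolding a'_def by simp
        finally show "a i j = (\<Sum>k<Suc r. w k i * w k j)" by simp
      qed
    next
      case False
      have zr2: "\<forall>i<n. \<forall>j<n. (r \<le> i \<or> r \<le> j) \<longrightarrow> a i j = 0"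
      proof (cases "r < n")
        case False thus ?thesis by auto
      next
        case rn: True
        have "0 \<le> a r r" using psd qf_delta[OF rn, of a] by metis
        hence arr: "a r r = 0" using False rn by simp
        have col: "a j r = 0" if "j < n" for j
        proof -
          have "(\<Sum>i<n. (if i = j then 1 else 0) * (\<Sum>k<n. a i k * (if k = r then 1 else 0)))\<^sup>2
             \<le> qf n a (\<lambda>i. if i = r then 1 else 0) * qf n a (\<lambda>i. if i = j then 1 else 0)"
            by (rule psd_cs[OF sym psd])
          hence "(a j r)\<^sup>2 \<le> 0" using that rn arr by (simp add: qf_delta sum_delta_r sum_delta_l)
          thus ?thesis by simp
        qed
        show ?thesis
        proof (intro allI impI)
          fix i j assume ij: "i < n" "j < n" "r \<le> i \<or> r \<le> j"
          show "a i j = 0"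
          proof (cases "i = r \<or> j = r")
            case True thus ?thesis using col sym ij by auto
          next
            case False thus ?thesis using zr ij by auto
          qed
        qed
      qed
      obtain w' where w': "\<forall>i<n. \<forall>j<n. a i j = (\<Sum>k<r. w' k i * w' k j)"
        using Suc.IH sym psd zr2 by blast
      show ?thesis
        by (rule exI[of _ "w'(r := (\<lambda>_. 0))"]) (simp add: lessThan_Suc w')
    qed
  qed
qed

lemma gram:
  fixes a :: "nat \<Rightarrow> nat \<Rightarrow> real"
  assumes "\<forall>i<n. \<forall>j<n. a i j = a j i" "\<forall>f. 0 \<le> qf n a f"
  shows "\<exists>w. \<forall>i<n. \<forall>j<n. a i j = (\<Sum>k<n. w k i * w k j)"
  using gram_aux[of n n] assms by auto



declare minus_carrier_mat[simp]

lemma cs_sum: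
  fixes a b :: "'a \<Rightarrow> real"
  shows "(\<Sum>i\<in>I. a i * b i)\<^sup>2 \<le> (\<Sum>i\<in>I. (a i)\<^sup>2) * (\<Sum>i\<in>I. (b i)\<^sup>2)"
proof (cases "finite I")
  case False thus ?thesis by simp
next
  case fin: True
  define A where "A = (\<Sum>i\<in>I. (a i)\<^sup>2)"
  define B where "B = (\<Sum>i\<in>I. a i * b i)"
  define C where "C = (\<Sum>i\<in>I. (b i)\<^sup>2)"
  have key: "0 \<le> A - 2 * t * B + t\<^sup>2 * C" for t
  proof -
    have "0 \<le> (\<Sum>i\<in>I. (a i - t * b i)\<^sup>2)" by (intro sum_nonneg) auto
    also have "\<dots> = A - 2 * t * B + t\<^sup>2 * C"
      unfolding A_def B_def C_def
      by (simp add: power2_eq_square algebra_simps sum.distrib sum_subtractf sum_distrib_left)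
    finally show ?thesis .
  qed
  have C0: "0 \<le> C" unfolding C_def by (intro sum_nonneg) auto
  show ?thesis
  proof (cases "C = 0")
    case True
    hence "\<forall>i\<in>I. b i = 0" using sum_nonneg_eq_0_iff[OF fin, of "\<lambda>i. (b i)\<^sup>2"] unfolding C_def by simp
    hence "B = 0" unfolding B_def by simp
    thus ?thesis using True unfolding A_def B_def C_def by simp
  next
    case False
    hence cp: "0 < C" using C0 by simp
    have "0 \<le> A - 2 * (B / C) * B + (B / C)\<^sup>2 * C" by (rule key)
    also have "\<dots> = A - B\<^sup>2 / C" using cp by (simp add: field_simps power2_eq_square)
    finally have "B\<^sup>2 / C \<le> A" by simp
    hence "B\<^sup>2 \<le> A * C" using cp by (simp add: pos_divide_le_eq)
    thus ?thesis unfolding A_def B_def C_def .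
  qed
qed

lemma minner_sum:
  assumes "A \<in> carrier_mat r c" "B \<in> carrier_mat r c"
  shows "minner A B = (\<Sum>j<c. \<Sum>i<r. A $$ (i,j) * B $$ (i,j))"
  using assms unfolding minner_def mtrace_def
  by (auto simp: scalar_prod_def atLeast0LessThan intro!: sum.cong)

lemma fnorm_minner: "fnorm A = sqrt (minner A A)" by (simp add: fnorm_def)

context fixes n :: nat begin
lemma minner_comm: "A \<in> carrier_mat n n \<Longrightarrow> B \<in> carrier_mat n n \<Longrightarrow> minner A B = minner B A"
  by (simp add: minner_sum[of _ n n] mult.commute)
lemma minner_add_left: "A \<in> carrier_mat n n \<Longrightarrow> B \<in> carrier_mat n n \<Longrightarrow> C \<in> carrier_mat n n \<Longrightarrow>
   minner (A + B) C = minner A C + minner B C"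
  by (simp add: minner_sum[of _ n n] sum.distrib algebra_simps)
lemma minner_add_right: "A \<in> carrier_mat n n \<Longrightarrow> B \<in> carrier_mat n n \<Longrightarrow> C \<in> carrier_mat n n \<Longrightarrow>
   minner C (A + B) = minner C A + minner C B"
  by (simp add: minner_sum[of _ n n] sum.distrib algebra_simps)
lemma minner_diff_left: "A \<in> carrier_mat n n \<Longrightarrow> B \<in> carrier_mat n n \<Longrightarrow> C \<in> carrier_mat n n \<Longrightarrow>
   minner (A - B) C = minner A C - minner B C"
  by (simp add: minner_sum[of _ n n] sum_subtractf algebra_simps)
lemma minner_diff_right: "A \<in> carrier_mat n n \<Longrightarrow> B \<in> carrier_mat n n \<Longrightarrow> C \<in> carrier_mat n n \<Longrightarrow>
   minner C (A - B) = minner C A - minner C B"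
  by (simp add: minner_sum[of _ n n] sum_subtractf algebra_simps)
lemma minner_smult_left: "A \<in> carrier_mat n n \<Longrightarrow> C \<in> carrier_mat n n \<Longrightarrow>
   minner (s \<cdot>\<^sub>m A) C = s * minner A C"
  by (simp add: minner_sum[of _ n n] sum_distrib_left algebra_simps)
lemma minner_smult_right: "A \<in> carrier_mat n n \<Longrightarrow> C \<in> carrier_mat n n \<Longrightarrow>
   minner C (s \<cdot>\<^sub>m A) = s * minner C A"
  by (simp add: minner_sum[of _ n n] sum_distrib_left algebra_simps)
end

lemma minner_cs:
  assumes A: "A \<in> carrier_mat r c" and B: "B \<in> carrier_mat r c"
  shows "minner A B \<le> fnorm A * fnorm B"
proof -
  let ?I = "{..<c} \<times> {..<r}"
  have eq: "minner M N = (\<Sum>(j,i)\<in>?I. M $$ (i,j) * N $$ (i,j))"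
    if "M \<in> carrier_mat r c" "N \<in> carrier_mat r c" for M N
    unfolding minner_sum[OF that] by (simp add: sum.cartesian_product)
  define s where "s = minner A B"
  have "s\<^sup>2 \<le> (\<Sum>x\<in>?I. (case x of (j,i) \<Rightarrow> A $$ (i,j))\<^sup>2) * (\<Sum>x\<in>?I. (case x of (j,i) \<Rightarrow> B $$ (i,j))\<^sup>2)"
    unfolding s_def eq[OF A B]
    using cs_sum[of "\<lambda>(j,i). A $$ (i,j)" "\<lambda>(j,i). B $$ (i,j)" ?I]
    by (simp add: case_prod_unfold)
  also have "\<dots> = minner A A * minner B B"
    unfolding eq[OF A A] eq[OF B B] by (simp add: case_prod_unfold power2_eq_square)
  finally have "s\<^sup>2 \<le> minner A A * minner B B" .
  hence "sqrt (s\<^sup>2) \<le> sqrt (minner A A * minner B B)" by (rule real_sqrt_le_mono)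
  hence "\<bar>s\<bar> \<le> fnorm A * fnorm B" by (simp add: fnorm_def real_sqrt_mult)
  thus ?thesis unfolding s_def by simp
qed

definition symm :: "nat \<Rightarrow> real mat \<Rightarrow> bool" where
  "symm n A \<longleftrightarrow> A \<in> carrier_mat n n \<and> (\<forall>i<n. \<forall>j<n. A $$ (i,j) = A $$ (j,i))"

lemma sym_mats_symm: "A \<in> sym_mats n \<longleftrightarrow> symm n A"
proof
  assume "A \<in> sym_mats n"
  hence A: "A \<in> carrier_mat n n" "transpose_mat A = A" by (auto simp: sym_mats_def)
  have ij: "A $$ (i,j) = A $$ (j,i)" if "i < n" "j < n" for i j
  proof -
    have "A $$ (j,i) = transpose_mat A $$ (i,j)" using A(1) that by simp
    also have "\<dots> = A $$ (i,j)" using A(2) by simp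
    finally show ?thesis by simp
  qed
  show "symm n A" unfolding symm_def using A(1) ij by blast
next
  assume "symm n A"
  thus "A \<in> sym_mats n" unfolding symm_def sym_mats_def by (auto intro!: eq_matI)
qed

lemma symmD: "symm n A \<Longrightarrow> i < n \<Longrightarrow> j < n \<Longrightarrow> A $$ (i,j) = A $$ (j,i)"
  unfolding symm_def by blast
lemma symm_carrier: "symm n A \<Longrightarrow> A \<in> carrier_mat n n"
  unfolding symm_def by blast
lemma symmI: "A \<in> carrier_mat n n \<Longrightarrow> (\<And>i j. i < n \<Longrightarrow> j < n \<Longrightarrow> A $$ (i,j) = A $$ (j,i)) \<Longrightarrow> symm n A"
  unfolding symm_def by blast
lemma vec_qf: "S \<in> carrier_mat n n \<Longrightarrow> vec n f \<bullet> (S *\<^sub>v vec n f) = qf n (\<lambda>i j. S $$ (i,j)) f"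
  unfolding qf_def by (auto simp: scalar_prod_def atLeast0LessThan intro!: sum.cong)

lemma psd_qf: "psd n S \<Longrightarrow> 0 \<le> qf n (\<lambda>i j. S $$ (i,j)) f"
  unfolding psd_def sym_mats_def using vec_qf[of S n f] by (metis (mono_tags) mem_Collect_eq vec_carrier)

lemma psd_symm: "psd n S \<Longrightarrow> symm n S"
  unfolding psd_def by (simp add: sym_mats_symm)

lemma lmin_qf:
  assumes X: "symm n X" and n: "0 < n" and lm: "- \<tau> \<le> lambda_min X"
  shows "- \<tau> * (\<Sum>i<n. (f i)\<^sup>2) \<le> qf n (\<lambda>i j. X $$ (i,j)) f"
proof -
  have Xc: "X \<in> carrier_mat n n" using X by (simp add: symm_def)
  obtain f0 \<mu> where f0: "(\<Sum>i<n. (f0 i)\<^sup>2) = 1"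
    and ev: "\<forall>i<n. (\<Sum>j<n. X $$ (i,j) * f0 j) = \<mu> * f0 i"
    and lb: "\<forall>f. \<mu> * (\<Sum>i<n. (f i)\<^sup>2) \<le> qf n (\<lambda>i j. X $$ (i,j)) f"
    using min_eig[OF n, of "\<lambda>i j. X $$ (i,j)"] X unfolding symm_def by blast
  have "vec n f0 \<noteq> 0\<^sub>v n"
  proof
    assume "vec n f0 = 0\<^sub>v n"
    hence "\<forall>i<n. f0 i = 0" by (metis index_vec index_zero_vec(1))
    hence "(\<Sum>i<n. (f0 i)\<^sup>2) = 0" by simp
    thus False using f0 by simp
  qed
  moreover have "X *\<^sub>v vec n f0 = \<mu> \<cdot>\<^sub>v vec n f0"
    using Xc ev by (auto intro!: eq_vecI simp: scalar_prod_def atLeast0LessThan)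
  ultimately have "eigenvector X (vec n f0) \<mu>" using Xc unfolding eigenvector_def by auto
  hence evl: "eigenvalue X \<mu>" unfolding eigenvalue_def by blast
  have cp: "char_poly X \<noteq> 0" using degree_monic_char_poly[OF Xc] by auto
  have "{l. eigenvalue X l} \<subseteq> {l. poly (char_poly X) l = 0}"
    using eigenvalue_root_char_poly[OF Xc] by auto
  hence fin: "finite {l. eigenvalue X l}" using poly_roots_finite[OF cp] finite_subset by blast
  have "lambda_min X \<le> \<mu>" unfolding lambda_min_def using fin evl by (intro Min_le) auto
  hence m: "- \<tau> \<le> \<mu>" using lm by simp
  have "0 \<le> (\<Sum>i<n. (f i)\<^sup>2)" by (intro sum_nonneg) auto
  hence "- \<tau> * (\<Sum>i<n. (f i)\<^sup>2) \<le> \<mu> * (\<Sum>i<n. (f i)\<^sup>2)" using m by (intro mult_right_mono)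
  thus ?thesis using lb by (meson order_trans)
qed

lemma sum_gram:
  fixes x :: "nat \<Rightarrow> nat \<Rightarrow> real" and w :: "nat \<Rightarrow> nat \<Rightarrow> real"
  shows "(\<Sum>j<n. \<Sum>i<n. x i j * (\<Sum>l<p. w l i * w l j)) = (\<Sum>l<p. qf n x (w l))"
proof -
  have "(\<Sum>j<n. \<Sum>i<n. x i j * (\<Sum>l<p. w l i * w l j)) = (\<Sum>j<n. \<Sum>i<n. \<Sum>l<p. x i j * w l i * w l j)"
    by (simp add: sum_distrib_left mult.assoc)
  also have "\<dots> = (\<Sum>i<n. \<Sum>j<n. \<Sum>l<p. x i j * w l i * w l j)" by (rule sum.swap)
  also have "\<dots> = (\<Sum>i<n. \<Sum>l<p. \<Sum>j<n. x i j * w l i * w l j)" by (rule sum.cong[OF refl], rule sum.swap)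
  also have "\<dots> = (\<Sum>l<p. \<Sum>i<n. \<Sum>j<n. x i j * w l i * w l j)" by (rule sum.swap)
  also have "\<dots> = (\<Sum>l<p. qf n x (w l))" unfolding qf_def by (simp add: sum_distrib_left mult_ac)
  finally show ?thesis .
qed

lemma YYt_entry: "Y \<in> carrier_mat n p \<Longrightarrow> i < n \<Longrightarrow> j < n \<Longrightarrow>
    (Y * transpose_mat Y) $$ (i,j) = (\<Sum>l<p. Y $$ (i,l) * Y $$ (j,l))"
  by (simp add: scalar_prod_def lessThan_atLeast0)

lemma minner_YYt: assumes Y: "Y \<in> carrier_mat n p" and X: "X \<in> carrier_mat n n"
  shows "minner X (Y * transpose_mat Y) = (\<Sum>l<p. qf n (\<lambda>i j. X $$ (i,j)) (\<lambda>i. Y $$ (i,l)))"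
proof -
  have "minner X (Y * transpose_mat Y) = (\<Sum>j<n. \<Sum>i<n. X $$ (i,j) * (\<Sum>l<p. Y $$ (i,l) * Y $$ (j,l)))"
    using X Y by (simp add: minner_sum[of _ n n] YYt_entry[OF Y] del: index_mult_mat)
  thus ?thesis using sum_gram[where n=n and x="\<lambda>i j. X $$ (i,j)" and p=p and w="\<lambda>l i. Y $$ (i,l)"] by simp
qed

lemma psd_YYt: assumes X: "psd n X" and Y: "Y \<in> carrier_mat n p" shows "0 \<le> minner X (Y * transpose_mat Y)"
  unfolding minner_YYt[OF Y symm_carrier[OF psd_symm[OF X]]] using psd_qf[OF X] by (simp add: sum_nonneg)

lemma minner_YYt_XY: assumes Y: "Y \<in> carrier_mat n p" and X: "X \<in> carrier_mat n n"
  shows "minner X (Y * transpose_mat Y) = minner Y (X * Y)"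
proof -
  have "minner Y (X * Y) = (\<Sum>l<p. \<Sum>i<n. Y $$ (i,l) * (\<Sum>j<n. X $$ (i,j) * Y $$ (j,l)))"
    using X Y by (simp add: minner_sum[of _ n p] scalar_prod_def atLeast0LessThan)
  also have "\<dots> = (\<Sum>l<p. qf n (\<lambda>i j. X $$ (i,j)) (\<lambda>i. Y $$ (i,l)))" by (simp add: qf_def)
  finally show ?thesis using minner_YYt[OF Y X] by simp
qed

lemma minner_lmin:
  assumes X: "symm n X" and n: "0 < n" and lm: "- \<tau> \<le> lambda_min X" and S: "psd n S"
    and d: "\<forall>i<n. S $$ (i,i) = 1"
  shows "- \<tau> * n \<le> minner X S"
proof -
  have Sc: "symm n S" using psd_symm[OF S] .
  obtain w where w: "\<forall>i<n. \<forall>j<n. S $$ (i,j) = (\<Sum>k<n. w k i * w k j)"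
    using gram[of n "\<lambda>i j. S $$ (i,j)"] Sc psd_qf[OF S] unfolding symm_def by blast
  have "minner X S = (\<Sum>j<n. \<Sum>i<n. X $$ (i,j) * (\<Sum>k<n. w k i * w k j))"
    using w by (simp add: minner_sum[OF symm_carrier[OF X] symm_carrier[OF Sc]])
  also have "\<dots> = (\<Sum>k<n. qf n (\<lambda>i j. X $$ (i,j)) (w k))" by (rule sum_gram)
  finally have eq: "minner X S = (\<Sum>k<n. qf n (\<lambda>i j. X $$ (i,j)) (w k))" .
  have "(\<Sum>k<n. - \<tau> * (\<Sum>i<n. (w k i)\<^sup>2)) \<le> (\<Sum>k<n. qf n (\<lambda>i j. X $$ (i,j)) (w k))"
    by (intro sum_mono lmin_qf[OF X n lm])
  moreover have "(\<Sum>k<n. - \<tau> * (\<Sum>i<n. (w k i)\<^sup>2)) = - \<tau> * (\<Sum>i<n. \<Sum>k<n. (w k i)\<^sup>2)"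
  proof -
    have "(\<Sum>k<n. - \<tau> * (\<Sum>i<n. (w k i)\<^sup>2)) = - \<tau> * (\<Sum>k<n. \<Sum>i<n. (w k i)\<^sup>2)"
      by (simp add: sum_distrib_left)
    also have "(\<Sum>k<n. \<Sum>i<n. (w k i)\<^sup>2) = (\<Sum>i<n. \<Sum>k<n. (w k i)\<^sup>2)" by (rule sum.swap)
    finally show ?thesis .
  qed
  moreover have "(\<Sum>i<n. \<Sum>k<n. (w k i)\<^sup>2) = n"
  proof -
    have "(\<Sum>i<n. \<Sum>k<n. (w k i)\<^sup>2) = (\<Sum>i<n. S $$ (i,i))"
      using w by (simp add: power2_eq_square)
    also have "\<dots> = n" using d by simp
    finally show ?thesis .
  qed
  ultimately show ?thesis using eq by simp
qed

lemma Diagm_carrier: "z \<in> carrier_vec n \<Longrightarrow> Diagm z \<in> carrier_mat n n"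
  by (simp add: Diagm_def)

lemma Diagm_symm: "z \<in> carrier_vec n \<Longrightarrow> symm n (Diagm z)"
  by (simp add: Diagm_def symm_def)

lemma minner_Diagm: assumes z: "z \<in> carrier_vec n" and M: "M \<in> carrier_mat n n"
  shows "minner (Diagm z) M = (\<Sum>i<n. z $ i * M $$ (i,i))"
proof -
  have "minner (Diagm z) M = (\<Sum>j<n. \<Sum>i<n. (if i = j then z $ i else 0) * M $$ (i,j))"
    using z M by (simp add: minner_sum[of _ n n] Diagm_carrier, simp add: Diagm_def)
  also have "\<dots> = (\<Sum>j<n. \<Sum>i<n. (if i = j then z $ j * M $$ (j,j) else 0))"
    by (intro sum.cong refl) auto
  also have "\<dots> = (\<Sum>j<n. z $ j * M $$ (j,j))"
    by (rule sum.cong[OF refl]) (subst sum.delta, auto)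
  finally show ?thesis .
qed

lemma symm_add: assumes A: "symm n A" and B: "symm n B" shows "symm n (A + B)"
proof (rule symmI)
  note Ac = carrier_matD[OF symm_carrier[OF A]] and Bc = carrier_matD[OF symm_carrier[OF B]]
  show "A + B \<in> carrier_mat n n" using symm_carrier[OF B] by simp
  fix i j assume ij: "i < n" "j < n"
  have "A $$ (i,j) = A $$ (j,i)" "B $$ (i,j) = B $$ (j,i)" using symmD[OF A ij] symmD[OF B ij] by auto
  thus "(A + B) $$ (i,j) = (A + B) $$ (j,i)" using ij Bc by simp
qed
lemma symm_minus: assumes A: "symm n A" and B: "symm n B" shows "symm n (A - B)"
proof (rule symmI)
  note Ac = carrier_matD[OF symm_carrier[OF A]] and Bc = carrier_matD[OF symm_carrier[OF B]]
  show "A - B \<in> carrier_mat n n" using symm_carrier[OF B] by simp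
  fix i j assume ij: "i < n" "j < n"
  have "A $$ (i,j) = A $$ (j,i)" "B $$ (i,j) = B $$ (j,i)" using symmD[OF A ij] symmD[OF B ij] by auto
  thus "(A - B) $$ (i,j) = (A - B) $$ (j,i)" using ij Bc by simp
qed
lemma symm_smult: assumes A: "symm n A" shows "symm n (c \<cdot>\<^sub>m A)"
proof (rule symmI)
  note Ac = carrier_matD[OF symm_carrier[OF A]]
  show "c \<cdot>\<^sub>m A \<in> carrier_mat n n" using symm_carrier[OF A] by simp
  fix i j assume ij: "i < n" "j < n"
  have "A $$ (i,j) = A $$ (j,i)" using symmD[OF A ij] by auto
  thus "(c \<cdot>\<^sub>m A) $$ (i,j) = (c \<cdot>\<^sub>m A) $$ (j,i)" using ij Ac by simp
qed
lemma symm_zero: "symm n (0\<^sub>m n n)"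
  by (simp add: symm_def)
lemma minner_self_nonneg: "A \<in> carrier_mat r c \<Longrightarrow> 0 \<le> minner A A"
  by (simp add: minner_sum[of _ r c] sum_nonneg)
lemma minner_zero_right: "A \<in> carrier_mat n n \<Longrightarrow> minner A (0\<^sub>m n n) = 0"
  by (simp add: minner_sum[of _ n n])



theorem lemma5p3:
  fixes n m :: nat and As :: "nat \<Rightarrow> real mat" and b :: "real vec" and C :: "real mat"
    and \<sigma>min \<sigma>max :: real and \<epsilon> \<tau> \<sigma> :: "nat \<Rightarrow> real" and p :: "nat \<Rightarrow> nat"
    and Y S Xt X :: "nat \<Rightarrow> real mat" and y z :: "nat \<Rightarrow> real vec"
  defines "D \<equiv> Aadj n m As (minv (AAstar m As) *\<^sub>v b)"
  assumes n_pos: "0 < n" and m_pos: "0 < m"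
    and As_sym: "\<forall>i<m. As i \<in> sym_mats n"
    and AA_inv: "invertible_mat (AAstar m As)"
    and b_dim: "b \<in> carrier_vec m" and C_sym: "C \<in> sym_mats n"
    and KKT: "\<exists>S0 y0 X0 z0. is_KKT n m As b C S0 y0 X0 z0"
    and sig: "0 < \<sigma>min" "\<sigma>min < \<sigma>max"
    and eps_pos: "\<forall>k. 0 < \<epsilon> k" and eps_sum: "summable \<epsilon>"
    and tau_pos: "\<forall>k. 0 < \<tau> k" and tau_sum: "summable \<tau>"
    and y0: "y 0 = 0\<^sub>v m" and Xt0: "Xt 0 = 0\<^sub>m n n"
    and sigma_k: "\<forall>k. \<sigma>min \<le> \<sigma> k \<and> \<sigma> k \<le> \<sigma>max"
    and p_pos: "\<forall>k. 0 < p (Suc k)"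
    and Y_dim: "\<forall>k. Y (Suc k) \<in> carrier_mat n (p (Suc k))"
    and Y_rows: "\<forall>k. \<forall>i<n. (\<Sum>j<p (Suc k). (Y (Suc k) $$ (i, j))\<^sup>2) = 1"
    and S_def: "\<forall>k. S (Suc k) = Y (Suc k) * transpose_mat (Y (Suc k))"
    and y_def: "\<forall>k. y (Suc k) = minv (AAstar m As) *\<^sub>v Aop m As (S (Suc k) + C)"
    and Xt_def: "\<forall>k. Xt (Suc k) = Xt k - \<sigma> k \<cdot>\<^sub>m (Aadj n m As (y (Suc k)) - S (Suc k) - C)"
    and z_def: "\<forall>k. z (Suc k) = mdiag ((Xt (Suc k) + D) * S (Suc k))"
    and X_def: "\<forall>k. X (Suc k) = Xt (Suc k) + D - Diagm (z (Suc k))"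
    and XY_small: "\<forall>k. fnorm (X (Suc k) * Y (Suc k)) \<le> \<epsilon> k"
    and lam_min: "\<forall>k. lambda_min (X (Suc k)) \<ge> - \<tau> k"
  shows "(\<lambda>k. fnorm (Aadj n m As (y k) - S k - C)) \<longlonglongrightarrow> 0"
proof -
  let ?G = "AAstar m As"
  define Gi where "Gi = minv ?G"
  have Asc: "As i \<in> carrier_mat n n" if "i < m" for i using As_sym that by (simp add: sym_mats_def)
  have Asym_e: "As i $$ (r,c) = As i $$ (c,r)" if "i < m" "r < n" "c < n" for i r c
    using As_sym that sym_mats_symm[of "As i" n] unfolding symm_def by blast
  have Gc: "?G \<in> carrier_mat m m" by (simp add: AAstar_def)
  have Ginv: "?G * Gi = 1\<^sub>m m \<and> Gi \<in> carrier_mat m m"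
  proof -
    obtain B where B: "inverts_mat ?G B" "inverts_mat B ?G" using AA_inv unfolding invertible_mat_def by blast
    have GB: "?G * B = 1\<^sub>m m" using B(1) Gc unfolding inverts_mat_def by simp
    have dc: "dim_col B = m" using arg_cong[OF GB, of dim_col] by simp
    have BG: "B * ?G = 1\<^sub>m (dim_row B)" using B(2) unfolding inverts_mat_def by simp
    have dr: "dim_row B = m"
    proof -
      have "dim_col (B * ?G) = dim_col ?G" by simp
      also have "\<dots> = m" using Gc by auto
      finally have "dim_col (B * ?G) = m" .
      thus ?thesis using BG by simp
    qed
    have Bc: "B \<in> carrier_mat m m" using dc dr by (intro carrier_matI)
    have BG': "B * ?G = 1\<^sub>m m" using BG unfolding dr .
    have "?G \<in> Units (ring_mat TYPE(real) m ())"
      unfolding Units_def ring_mat_simps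
      by (rule CollectI, rule conjI, rule Gc, rule bexI[of _ B], rule conjI, rule BG', rule GB, rule Bc)
    hence "mat_inverse ?G \<noteq> None" using mat_inverse(1)[OF Gc, where b="()"] by blast
    then obtain B' where "mat_inverse ?G = Some B'" by blast
    thus ?thesis using mat_inverse(2)[OF Gc] unfolding Gi_def minv_def by auto
  qed
  have Gic: "Gi \<in> carrier_mat m m" using Ginv by blast
  have GGi: "?G *\<^sub>v (Gi *\<^sub>v v) = v" if v: "v \<in> carrier_vec m" for v
  proof -
    have "?G *\<^sub>v (Gi *\<^sub>v v) = (?G * Gi) *\<^sub>v v" using assoc_mult_mat_vec[OF Gc Gic v] by simp
    also have "\<dots> = v" using Ginv v by simp
    finally show ?thesis .
  qed
  have Aadj_c: "Aadj n m As u \<in> carrier_mat n n" for u by (simp add: Aadj_def)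
  have Aadj_e: "Aadj n m As u $$ (r,c) = (\<Sum>i<m. u $ i * As i $$ (r,c))" if "r < n" "c < n" for u r c
    using that by (simp add: Aadj_def)
  have Aadj_symm: "symm n (Aadj n m As u)" for u
    by (auto simp: symm_def Aadj_c Aadj_e Asym_e intro!: sum.cong)
  have minner_Aadj: "minner V (Aadj n m As u) = (\<Sum>i<m. u $ i * minner (As i) V)"
    if V: "V \<in> carrier_mat n n" for V u
  proof -
    have "minner V (Aadj n m As u) = (\<Sum>c<n. \<Sum>r<n. V $$ (r,c) * (\<Sum>i<m. u $ i * As i $$ (r,c)))"
      using V by (simp add: minner_sum[OF V Aadj_c] Aadj_e)
    also have "\<dots> = (\<Sum>c<n. \<Sum>r<n. \<Sum>i<m. u $ i * (As i $$ (r,c) * V $$ (r,c)))"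
      by (simp add: sum_distrib_left mult_ac)
    also have "\<dots> = (\<Sum>c<n. \<Sum>i<m. \<Sum>r<n. u $ i * (As i $$ (r,c) * V $$ (r,c)))"
      by (rule sum.cong[OF refl], rule sum.swap)
    also have "\<dots> = (\<Sum>i<m. \<Sum>c<n. \<Sum>r<n. u $ i * (As i $$ (r,c) * V $$ (r,c)))" by (rule sum.swap)
    also have "\<dots> = (\<Sum>i<m. u $ i * minner (As i) V)"
      using V Asc by (simp add: minner_sum[of _ n n] sum_distrib_left)
    finally show ?thesis .
  qed
  have null_Aadj: "minner V (Aadj n m As u) = 0"
    if "V \<in> carrier_mat n n" "\<forall>i<m. minner (As i) V = 0" for V u
    using minner_Aadj[OF that(1)] that(2) by simp
  have Aop_i: "Aop m As M $ i = minner (As i) M" if "i < m" for M i using that by (simp add: Aop_def)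
  have Aop_Aadj: "Aop m As (Aadj n m As u) = ?G *\<^sub>v u" if u: "u \<in> carrier_vec m" for u
  proof (rule eq_vecI)
    fix i assume i: "i < dim_vec (?G *\<^sub>v u)"
    hence im: "i < m" using Gc by simp
    have cm: "\<forall>l<m. minner (As l) (As i) = minner (As i) (As l)"
      using minner_comm Asc im by blast
    have "Aop m As (Aadj n m As u) $ i = minner (As i) (Aadj n m As u)" using im by (simp add: Aop_def)
    also have "\<dots> = (\<Sum>l<m. u $ l * minner (As l) (As i))" using minner_Aadj[OF Asc[OF im]] .
    also have "\<dots> = (\<Sum>l<m. ?G $$ (i,l) * u $ l)"
    proof (rule sum.cong[OF refl])
      fix l assume "l \<in> {..<m}"
      hence lm: "l < m" by simp
      have "minner (As l) (As i) = minner (As i) (As l)" using cm lm by blast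
      thus "u $ l * minner (As l) (As i) = ?G $$ (i,l) * u $ l" using im lm by (simp add: AAstar_def)
    qed
    also have "\<dots> = (?G *\<^sub>v u) $ i"
      using im u Gc by (simp add: scalar_prod_def atLeast0LessThan)
    finally show "Aop m As (Aadj n m As u) $ i = (?G *\<^sub>v u) $ i" .
  next
    show "dim_vec (Aop m As (Aadj n m As u)) = dim_vec (?G *\<^sub>v u)" using Gc by (simp add: Aop_def)
  qed
  have Cc: "C \<in> carrier_mat n n" using C_sym unfolding sym_mats_def by blast
  have Csymm: "symm n C" using C_sym sym_mats_symm by blast
  have Dc: "D \<in> carrier_mat n n" unfolding D_def by (rule Aadj_c)
  have Dsymm: "symm n D" unfolding D_def by (rule Aadj_symm)
  have AopD: "Aop m As D = b"
    unfolding D_def Gi_def[symmetric] using Aop_Aadj[of "Gi *\<^sub>v b"] GGi[OF b_dim] Gic b_dim by simp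
  have AsD: "minner (As i) D = b $ i" if "i < m" for i using AopD Aop_i[OF that, of D] by simp
  have Yc: "Y (Suc k) \<in> carrier_mat n (p (Suc k))" for k using Y_dim by blast
  have Sc: "S (Suc k) \<in> carrier_mat n n" for k using Yc[of k] S_def by simp
  have Se: "S (Suc k) $$ (i,j) = (\<Sum>l<p (Suc k). Y (Suc k) $$ (i,l) * Y (Suc k) $$ (j,l))"
    if "i < n" "j < n" for k i j
    using YYt_entry[OF Yc that] S_def by simp
  have Ssymm: "symm n (S (Suc k))" for k
    by (auto simp: symm_def Sc Se mult.commute intro!: sum.cong)
  have Sdiag: "S (Suc k) $$ (i,i) = 1" if "i < n" for k i
    using Se[OF that that, of k] Y_rows that by (simp add: power2_eq_square)
  have y_def': "y (Suc k) = Gi *\<^sub>v Aop m As (S (Suc k) + C)" for k using y_def unfolding Gi_def by simp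
  have yc: "y (Suc k) \<in> carrier_vec m" for k using y_def' Gic by (simp add: Aop_def)
  define R where "R = (\<lambda>k. Aadj n m As (y k) - S k - C)"
  have Rc: "R k \<in> carrier_mat n n" for k using Cc unfolding R_def by simp
  have Rsymm: "symm n (R (Suc k))" for k
    unfolding R_def by (intro symm_minus Aadj_symm Ssymm Csymm)
  have Rnull: "\<forall>i<m. minner (As i) (R (Suc k)) = 0" for k
  proof (intro allI impI)
    fix i assume im: "i < m"
    have vc: "Aop m As (S (Suc k) + C) \<in> carrier_vec m" by (simp add: Aop_def)
    have "Aop m As (Aadj n m As (y (Suc k))) = ?G *\<^sub>v (Gi *\<^sub>v Aop m As (S (Suc k) + C))"
      using Aop_Aadj[OF yc[of k]] y_def'[of k] by simp
    also have "\<dots> = Aop m As (S (Suc k) + C)" using GGi[OF vc] .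
    finally have eqv: "Aop m As (Aadj n m As (y (Suc k))) = Aop m As (S (Suc k) + C)" .
    have "minner (As i) (Aadj n m As (y (Suc k))) = minner (As i) (S (Suc k) + C)"
      using arg_cong[OF eqv, of "\<lambda>v. v $ i"] by (simp add: Aop_i[OF im])
    also have "\<dots> = minner (As i) (S (Suc k)) + minner (As i) C"
      using minner_add_right[OF Sc Cc Asc[OF im]] .
    finally show "minner (As i) (R (Suc k)) = 0" unfolding R_def
      using Sc[of k] Cc Asc[OF im] Aadj_c[of "y (Suc k)"]
      by (simp add: minner_diff_right[where n=n])
  qed
  have Xt_step: "Xt (Suc k) = Xt k - \<sigma> k \<cdot>\<^sub>m R (Suc k)" for k using Xt_def R_def by simp
  have Xt_facts: "symm n (Xt k) \<and> (\<forall>i<m. minner (As i) (Xt k) = 0)" for k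
  proof (induction k)
    case 0
    show ?case using Xt0 symm_zero minner_zero_right Asc by simp
  next
    case (Suc k)
    hence Xk: "symm n (Xt k)" and Xn: "\<forall>i<m. minner (As i) (Xt k) = 0" by auto
    have "symm n (Xt (Suc k))" unfolding Xt_step by (intro symm_minus symm_smult Xk Rsymm)
    moreover have "\<forall>i<m. minner (As i) (Xt (Suc k)) = 0"
      using Xn Rnull[of k] Asc Rc symm_carrier[OF Xk]
      by (simp add: Xt_step minner_diff_right[where n=n] minner_smult_right[where n=n])
    ultimately show ?case by blast
  qed
  have Xtc: "Xt k \<in> carrier_mat n n" for k using Xt_facts symm_carrier by blast
  have zc: "z (Suc k) \<in> carrier_vec n" for k using z_def carrier_matD[OF Dc] by (simp add: mdiag_def)
  have Xc: "X (Suc k) \<in> carrier_mat n n" for k using X_def Xtc Dc zc Diagm_carrier by simp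
  have Xsymm: "symm n (X (Suc k))" for k
    using X_def by (simp, intro symm_minus symm_add Dsymm Diagm_symm zc) (use Xt_facts in blast)
  obtain Ss ys Xs zs where K: "is_KKT n m As b C Ss ys Xs zs" using KKT by blast
  hence ys: "ys \<in> carrier_vec m" and zs: "zs \<in> carrier_vec n" and Ss_eq: "Ss = Aadj n m As ys - C"
    and Sspsd: "psd n Ss" and Ssd: "mdiag Ss = ones n" and Xspsd: "psd n Xs"
    and XS0: "minner Xs Ss = 0" and AXz: "Aop m As (Xs + Diagm zs) = b"
    unfolding is_KKT_def by auto
  have Xsc: "Xs \<in> carrier_mat n n" using psd_symm[OF Xspsd] symm_carrier by blast
  have Ssc: "Ss \<in> carrier_mat n n" using psd_symm[OF Sspsd] symm_carrier by blast
  have Ssdiag: "\<forall>i<n. Ss $$ (i,i) = 1"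
  proof (intro allI impI)
    fix i assume i: "i < n"
    have "mdiag Ss $ i = ones n $ i" using Ssd by simp
    thus "Ss $$ (i,i) = 1" using i carrier_matD[OF Ssc] by (simp add: mdiag_def ones_def)
  qed
  have Dzs: "Diagm zs \<in> carrier_mat n n" using Diagm_carrier[OF zs] .
  define W where "W = Xs + Diagm zs - D"
  have Wc: "W \<in> carrier_mat n n" unfolding W_def using Dc by simp
  have Wnull: "\<forall>i<m. minner (As i) W = 0"
  proof (intro allI impI)
    fix i assume im: "i < m"
    have "minner (As i) (Xs + Diagm zs) = b $ i" using AXz Aop_i[OF im, of "Xs + Diagm zs"] by simp
    have XDc: "Xs + Diagm zs \<in> carrier_mat n n" using Dzs by simp
    thus "minner (As i) W = 0" unfolding W_def
      using minner_diff_right[OF XDc Dc Asc[OF im]] AsD[OF im] \<open>minner (As i) (Xs + Diagm zs) = b $ i\<close> by simp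
  qed
  define U where "U = (\<lambda>k. Xt k - W)"
  have Uc: "U k \<in> carrier_mat n n" for k unfolding U_def using Wc by simp
  have Unull: "\<forall>i<m. minner (As i) (U k) = 0" for k
    using Xt_facts[of k] Wnull Asc Xtc Wc by (simp add: U_def minner_diff_right[where n=n])
  have U_step: "U (Suc k) = U k - \<sigma> k \<cdot>\<^sub>m R (Suc k)" for k
    using carrier_matD[OF Xtc[of k]] carrier_matD[OF Wc] carrier_matD[OF Rc[of "Suc k"]]
    by (intro eq_matI) (auto simp: U_def Xt_step)
  define \<delta> where "\<delta> = (\<lambda>k. \<epsilon> k * sqrt n + \<tau> k * n)"
  have key: "- minner (U (Suc k)) (R (Suc k)) \<le> \<delta> k" for k
  proof -
    have i1: "minner (X (Suc k)) (S (Suc k)) \<le> \<epsilon> k * sqrt n"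
    proof -
      have XYc: "X (Suc k) * Y (Suc k) \<in> carrier_mat n (p (Suc k))" by (rule mult_carrier_mat[OF Xc[of k] Yc[of k]])
      have "minner (X (Suc k)) (S (Suc k)) = minner (Y (Suc k)) (X (Suc k) * Y (Suc k))"
        using minner_YYt_XY[OF Yc[of k] Xc[of k]] S_def by simp
      also have "\<dots> \<le> fnorm (Y (Suc k)) * fnorm (X (Suc k) * Y (Suc k))"
        by (rule minner_cs[OF Yc[of k] XYc])
      also have "fnorm (Y (Suc k)) * fnorm (X (Suc k) * Y (Suc k)) = sqrt n * fnorm (X (Suc k) * Y (Suc k))"
      proof -
        have "minner (Y (Suc k)) (Y (Suc k)) = (\<Sum>l<p (Suc k). \<Sum>i<n. (Y (Suc k) $$ (i,l))\<^sup>2)"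
          using minner_sum[OF Yc[of k] Yc[of k]] by (simp add: power2_eq_square)
        also have "\<dots> = (\<Sum>i<n. \<Sum>l<p (Suc k). (Y (Suc k) $$ (i,l))\<^sup>2)" by (rule sum.swap)
        also have "\<dots> = n" using Y_rows by simp
        finally show ?thesis by (simp add: fnorm_def)
      qed
      also have "sqrt n * fnorm (X (Suc k) * Y (Suc k)) \<le> sqrt n * \<epsilon> k"
        using XY_small by (intro mult_left_mono) auto
      finally show ?thesis by (simp add: mult.commute)
    qed
    have i2: "- \<tau> k * n \<le> minner (X (Suc k)) Ss"
      by (rule minner_lmin[OF Xsymm[of k] n_pos _ Sspsd Ssdiag]) (use lam_min in auto)
    have i3: "0 \<le> minner Xs (S (Suc k))" using psd_YYt[OF Xspsd Yc[of k]] S_def by simp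
    have XU: "X (Suc k) = Xt (Suc k) + D - Diagm (z (Suc k))" using X_def by simp
    have E1: "minner (X (Suc k)) M = minner (U (Suc k)) M + minner Xs M + minner (Diagm zs) M
        - minner (Diagm (z (Suc k))) M" if M: "M \<in> carrier_mat n n" for M
      unfolding XU U_def W_def using M Xtc[of "Suc k"] Dc Xsc Dzs Diagm_carrier[OF zc[of k]]
      by (simp add: minner_add_left[where n=n] minner_diff_left[where n=n])
    have E2: "minner (Diagm w) (S (Suc k)) = minner (Diagm w) Ss" if w: "w \<in> carrier_vec n" for w
      using Ssdiag Sdiag[where k=k] by (simp add: minner_Diagm[OF w Sc[of k]] minner_Diagm[OF w Ssc])
    have E3: "minner (U (Suc k)) Ss = - minner (U (Suc k)) C"
      unfolding Ss_eq using null_Aadj[OF Uc[of "Suc k"] Unull[of "Suc k"]] Uc[of "Suc k"] Cc Aadj_c[of ys]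
      by (simp add: minner_diff_right[where n=n])
    have E4: "minner (U (Suc k)) (R (Suc k)) = - minner (U (Suc k)) (S (Suc k)) - minner (U (Suc k)) C"
      unfolding R_def using null_Aadj[OF Uc[of "Suc k"] Unull[of "Suc k"]] Uc[of "Suc k"] Cc Aadj_c[of "y (Suc k)"] Sc[of k]
      by (simp add: minner_diff_right[where n=n])
    have i2': "- (\<tau> k * n) \<le> minner (X (Suc k)) Ss" using i2 by simp
    show ?thesis using E1[OF Sc[of k]] E1[OF Ssc] E2[OF zs] E2[OF zc[of k]] E3 E4 XS0 i1 i2' i3
      unfolding \<delta>_def by linarith
  qed
  define a where "a = (\<lambda>k. minner (U k) (U k))"
  define r where "r = (\<lambda>k. minner (R (Suc k)) (R (Suc k)))"
  have a0: "0 \<le> a k" for k unfolding a_def by (rule minner_self_nonneg[OF Uc])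
  have r0: "0 \<le> r k" for k unfolding r_def by (rule minner_self_nonneg[OF Rc])
  have d0: "0 \<le> \<delta> k" for k unfolding \<delta>_def using eps_pos tau_pos
    by (intro add_nonneg_nonneg mult_nonneg_nonneg) (auto simp: less_imp_le)
  have step: "a (Suc k) + (\<sigma> k)\<^sup>2 * r k = a k - 2 * (\<sigma> k * minner (U (Suc k)) (R (Suc k)))" for k
  proof -
    have cm: "minner (R (Suc k)) (U k) = minner (U k) (R (Suc k))" using minner_comm Rc Uc by blast
    show ?thesis unfolding a_def r_def U_step using Uc[of k] Rc[of "Suc k"] cm
      by (simp add: minner_diff_left[where n=n] minner_diff_right[where n=n]
          minner_smult_left[where n=n] minner_smult_right[where n=n] power2_eq_square algebra_simps)
  qed
  have ineq: "\<sigma>min\<^sup>2 * r k \<le> a k - a (Suc k) + 2 * \<sigma>max * \<delta> k" for k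
  proof -
    have s: "\<sigma>min \<le> \<sigma> k" "\<sigma> k \<le> \<sigma>max" using sigma_k by auto
    have sp: "0 < \<sigma> k" using s sig by linarith
    have f1: "\<sigma> k * (- minner (U (Suc k)) (R (Suc k))) \<le> \<sigma> k * \<delta> k"
      using key sp by (intro mult_left_mono) auto
    have f2: "\<sigma> k * \<delta> k \<le> \<sigma>max * \<delta> k" using s d0 by (intro mult_right_mono) auto
    have "\<sigma>min\<^sup>2 \<le> (\<sigma> k)\<^sup>2" using s sig by (intro power_mono) auto
    hence f3: "\<sigma>min\<^sup>2 * r k \<le> (\<sigma> k)\<^sup>2 * r k" using r0 by (intro mult_right_mono) auto
    have f1': "- (\<sigma> k * minner (U (Suc k)) (R (Suc k))) \<le> \<sigma> k * \<delta> k" using f1 by simp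
    show ?thesis using step[of k] f1' f2 f3 by linarith
  qed
  have sd: "summable \<delta>" unfolding \<delta>_def
    by (intro summable_add summable_mult2 eps_sum tau_sum)
  define Bd where "Bd = (a 0 + 2 * \<sigma>max * suminf \<delta>) / \<sigma>min\<^sup>2"
  have smp: "0 < \<sigma>min\<^sup>2" using sig by simp
  have bnd: "(\<Sum>k<N. r k) \<le> Bd" for N
  proof -
    have "\<sigma>min\<^sup>2 * (\<Sum>k<N. r k) = (\<Sum>k<N. \<sigma>min\<^sup>2 * r k)" by (simp add: sum_distrib_left)
    also have "\<dots> \<le> (\<Sum>k<N. (a k - a (Suc k)) + 2 * \<sigma>max * \<delta> k)" by (intro sum_mono ineq)
    also have "\<dots> = a 0 - a N + 2 * \<sigma>max * (\<Sum>k<N. \<delta> k)"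
      by (simp add: sum.distrib sum_lessThan_telescope' sum_distrib_left)
    also have "\<dots> \<le> a 0 + 2 * \<sigma>max * suminf \<delta>"
    proof -
      have "(\<Sum>k<N. \<delta> k) \<le> suminf \<delta>" using sd d0 by (intro sum_le_suminf) auto
      hence "2 * \<sigma>max * (\<Sum>k<N. \<delta> k) \<le> 2 * \<sigma>max * suminf \<delta>" using sig by (intro mult_left_mono) auto
      thus ?thesis using a0[of N] by linarith
    qed
    finally show ?thesis unfolding Bd_def using smp by (simp add: pos_le_divide_eq mult.commute)
  qed
  have "summable r" by (rule summableI_nonneg_bounded[OF r0 bnd])
  hence "r \<longlonglongrightarrow> 0" by (rule summable_LIMSEQ_zero)
  hence "(\<lambda>k. sqrt (r k)) \<longlonglongrightarrow> sqrt 0" by (rule tendsto_real_sqrt)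
  hence "(\<lambda>k. fnorm (R (Suc k))) \<longlonglongrightarrow> 0" by (simp add: r_def fnorm_def)
  hence "(\<lambda>k. fnorm (R k)) \<longlonglongrightarrow> 0" by (rule filterlim_sequentially_Suc[THEN iffD1])
  thus ?thesis unfolding R_def .
qed


end
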